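(* For every tetrahedral erasure channel $W$, $A(W^{s})\le A(W)\bigl(1-A(W)/3\bigr)$ and $A(W^{p})\le A(W)\bigl(1-A(W)/3\bigr)$.
   Context: $\mathrm{TEC}(p,q,r,s,t)$ denotes a tetrahedral erasure channel with parameters $p,q,r,s,t\ge0$ summing to $1$. Its moment of inertia is $A(\mathrm{TEC}(p,q,r,s,t))=(q-r)^2+(r-s)^2+(s-q)^2$. For $W=\mathrm{TEC}(p,q,r,s,t)$, the serial child is $W^{s}=\mathrm{TEC}(p^2,\ ps+sq+qp,\ pq+qr+rp,\ pr+rs+sp,\ 1-\text{(sum of the other four)})$ and the parallel child is $W^{p}=\mathrm{TEC}(1-\text{(sum of the other four)},\ ts+sq+qt,\ tq+qr+rt,\ tr+rs+st,\ t^2)$. *)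

theory Defs
  imports Complex_Main
begin

type_synonym tec = "real \<times> real \<times> real \<times> real \<times> real"

definition is_tec :: "tec \<Rightarrow> bool" where
  "is_tec W = (case W of (p, q, r, s, t) \<Rightarrow>
     p \<ge> 0 \<and> q \<ge> 0 \<and> r \<ge> 0 \<and> s \<ge> 0 \<and> t \<ge> 0 \<and> p + q + r + s + t = 1)"

definition inertia :: "tec \<Rightarrow> real" where
  "inertia W = (case W of (p, q, r, s, t) \<Rightarrow> (q - r)^2 + (r - s)^2 + (s - q)^2)"

definition serial_child :: "tec \<Rightarrow> tec" where
  "serial_child W = (case W of (p, q, r, s, t) \<Rightarrow>
     (let p' = p^2; q' = p*s + s*q + q*p; r' = p*q + q*r + r*p; s' = p*r + r*s + s*p
      in (p', q', r', s', 1 - (p' + q' + r' + s'))))"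

definition parallel_child :: "tec \<Rightarrow> tec" where
  "parallel_child W = (case W of (p, q, r, s, t) \<Rightarrow>
     (let q' = t*s + s*q + q*t; r' = t*q + q*r + r*t; s' = t*r + r*s + s*t; t' = t^2
      in (1 - (q' + r' + s' + t'), q', r', s', t')))"

end

theory Submission
  imports Defs
begin

lemma K0: fixes x y :: real assumes "x\<ge>0" "y\<ge>0" "x+y\<le>1"
  shows "4*(x^2+x*y+y^2)^2/3 \<le> x^3+y^3+(x+y)^3"
proof -
  have e: "3*(x+y)*(x^3+y^3+(x+y)^3) - 4*(x^2+x*y+y^2)^2 = 2*x^4+7*x^3*y+6*x^2*y^2+7*x*y^3+2*y^4"
    by algebra
  have "0 \<le> 2*x^4+7*x^3*y+6*x^2*y^2+7*x*y^3+2*y^4" using assms by simp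
  hence "4*(x^2+x*y+y^2)^2 \<le> 3*(x+y)*(x^3+y^3+(x+y)^3)" using e by linarith
  moreover have "(x+y)*(x^3+y^3+(x+y)^3) \<le> x^3+y^3+(x+y)^3"
    using assms by (intro mult_left_le_one_le) auto
  ultimately show ?thesis by linarith
qed

definition AA :: "real \<Rightarrow> real \<Rightarrow> real \<Rightarrow> real" where
  "AA q r s = (q - r)^2 + (r - s)^2 + (s - q)^2"
definition FF :: "real \<Rightarrow> real \<Rightarrow> real \<Rightarrow> real" where
  "FF q r s = (r+s)*(r-s)^2 + (q+s)*(q-s)^2 + (q+r)*(q-r)^2"

lemma cube_le: fixes y z :: real assumes "0 \<le> y" "y \<le> z"
  shows "y^3 \<le> z * y^2"
proof -
  have "y*y^2 \<le> z*y^2" using assms by (intro mult_right_mono) auto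
  thus ?thesis by (simp add: power3_eq_cube power2_eq_square)
qed

lemma Kord: fixes u v w :: real assumes "w\<ge>0" "v\<ge>w" "u\<ge>v" "u+v+w\<le>1"
  shows "(AA u v w)^2/3 \<le> FF u v w"
proof -
  define x where "x = u - v"
  define y where "y = v - w"
  have x0: "x\<ge>0" "y\<ge>0" "x+y\<le>1" using assms by (auto simp: x_def y_def)
  have A: "AA u v w = 2*(x^2+x*y+y^2)"
    unfolding AA_def x_def y_def by algebra
  have t1: "y^3 \<le> (v+w)*(v-w)^2" using cube_le[of y "v+w"] x0 assms by (simp add: y_def)
  have t2: "(x+y)^3 \<le> (u+w)*(u-w)^2" using cube_le[of "x+y" "u+w"] x0 assms by (simp add: x_def y_def)
  have t3: "x^3 \<le> (u+v)*(u-v)^2" using cube_le[of x "u+v"] x0 assms by (simp add: x_def)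
  have "(AA u v w)^2/3 = 4*(x^2+x*y+y^2)^2/3" unfolding A by algebra
  also have "\<dots> \<le> x^3+y^3+(x+y)^3" by (rule K0[OF x0])
  also have "\<dots> \<le> FF u v w" unfolding FF_def using t1 t2 t3 by linarith
  finally show ?thesis .
qed

lemma AA_perm: "AA q r s = AA r q s" "AA q r s = AA q s r"
  unfolding AA_def by algebra+
lemma FF_perm: "FF q r s = FF r q s" "FF q r s = FF q s r"
  unfolding FF_def by algebra+

lemma K: fixes q r s :: real assumes "q\<ge>0" "r\<ge>0" "s\<ge>0" "q+r+s\<le>1"
  shows "(AA q r s)^2/3 \<le> FF q r s"
proof -
  have "q\<ge>r \<and> r\<ge>s \<or> q\<ge>s \<and> s\<ge>r \<or> r\<ge>q \<and> q\<ge>s \<or> r\<ge>s \<and> s\<ge>q \<or> s\<ge>q \<and> q\<ge>r \<or> s\<ge>r \<and> r\<ge>q"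
    by linarith
  thus ?thesis
  proof (elim disjE)
    assume h: "q\<ge>r \<and> r\<ge>s" thus ?thesis using Kord[of s r q] assms by auto
  next
    assume h: "q\<ge>s \<and> s\<ge>r" thus ?thesis using Kord[of r s q] assms AA_perm FF_perm by auto
  next
    assume h: "r\<ge>q \<and> q\<ge>s" thus ?thesis using Kord[of s q r] assms AA_perm FF_perm by auto
  next
    assume h: "r\<ge>s \<and> s\<ge>q" thus ?thesis using Kord[of q s r] assms AA_perm FF_perm by (metis add.commute add.left_commute)
  next
    assume h: "s\<ge>q \<and> q\<ge>r" thus ?thesis using Kord[of r q s] assms AA_perm FF_perm by (metis add.commute add.left_commute)
  next
    assume h: "s\<ge>r \<and> r\<ge>q" thus ?thesis using Kord[of q r s] assms AA_perm FF_perm by (metis add.commute add.left_commute)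
  qed
qed

lemma child: fixes x q r s :: real assumes "x\<ge>0" "q\<ge>0" "r\<ge>0" "s\<ge>0" "x+q+r+s\<le>1"
  shows "((x+q)*(s-r))^2 + ((x+r)*(q-s))^2 + ((x+s)*(r-q))^2 \<le> AA q r s * (1 - AA q r s / 3)"
proof -
  have m: "a^2 * b^2 \<le> (1 - c - d) * b^2" if "0 \<le> a" "a \<le> 1 - c - d" "a \<le> 1" for a b c d :: real
  proof -
    have "a^2 \<le> a" using that by (simp add: power2_eq_square mult_left_le_one_le)
    hence "a^2 \<le> 1 - c - d" using that by linarith
    thus ?thesis by (intro mult_right_mono) auto
  qed
  have "((x+q)*(s-r))^2 + ((x+r)*(q-s))^2 + ((x+s)*(r-q))^2
      = (x+q)^2*(r-s)^2 + (x+r)^2*(q-s)^2 + (x+s)^2*(q-r)^2"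
    by algebra
  also have "\<dots> \<le> (1-r-s)*(r-s)^2 + (1-q-s)*(q-s)^2 + (1-q-r)*(q-r)^2"
    using m[of "x+q" r s "r-s"] m[of "x+r" q s "q-s"] m[of "x+s" q r "q-r"] assms
    by (smt (verit))
  also have "\<dots> = AA q r s - FF q r s" unfolding AA_def FF_def by algebra
  also have "\<dots> \<le> AA q r s - (AA q r s)^2/3" using K[of q r s] assms by linarith
  also have "\<dots> = AA q r s * (1 - AA q r s / 3)" by (simp add: power2_eq_square algebra_simps)
  finally show ?thesis .
qed

theorem mainTheorem2:
  fixes W :: tec
  assumes "is_tec W"
  shows "inertia (serial_child W) \<le> inertia W * (1 - inertia W / 3)
    \<and> inertia (parallel_child W) \<le> inertia W * (1 - inertia W / 3)"
proof -
  obtain p q r s t where W: "W = (p,q,r,s,t)" by (cases W) auto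
  have h: "p\<ge>0" "q\<ge>0" "r\<ge>0" "s\<ge>0" "t\<ge>0" "p+q+r+s+t=1" using assms by (auto simp: W is_tec_def)
  have IW: "inertia W = AA q r s" by (simp add: W inertia_def AA_def)
  have S: "inertia (serial_child W) = ((p+q)*(s-r))^2 + ((p+r)*(q-s))^2 + ((p+s)*(r-q))^2"
    by (simp add: W serial_child_def inertia_def Let_def) algebra
  have P: "inertia (parallel_child W) = ((t+q)*(s-r))^2 + ((t+r)*(q-s))^2 + ((t+s)*(r-q))^2"
    by (simp add: W parallel_child_def inertia_def Let_def) algebra
  show ?thesis unfolding S P IW
    using child[of p q r s] child[of t q r s] h by auto
qed

end
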